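(* Let $A$ be a finite nonempty set of positive real numbers, let $P=A\times A\subset\mathbb{R}^2$, and let $m<m'$ be two consecutive elements of the ratio set $A/A=\{b/a: a,b\in A\}$ (i.e. no element of $A/A$ lies strictly between them). Let $n=|\{(x,y)\in P: y/x=m\}|$ and $n'=|\{(x,y)\in P: y/x=m'\}|$. Then the open interval $(m,m')$ contains at least $n+n'-1$ distinct elements of $\frac{A+A}{A+A}$.
   Context: $\frac{A+A}{A+A}:=\left\{\frac{a+b}{c+d}: a,b,c,d\in A\right\}$. *)

theory Defs
  imports Main Complex_Main
begin

definition ratio_set :: "real set \<Rightarrow> real set" where
  "ratio_set A = {b / a | a b. a \<in> A \<and> b \<in> A}"

definition sum_quotient_set :: "real set \<Rightarrow> real set" where
  "sum_quotient_set A = {(a + b) / (c + d) | a b c d. a \<in> A \<and> b \<in> A \<and> c \<in> A \<and> d \<in> A}"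

end

theory Submission
  imports Defs
begin

lemma gle:
  fixes m m' x y x' y' :: real
  assumes "0<x" "0<y" "0<x'" "0<y'" "m<m'"
  shows "(m*x+m'*y)/(x+y) \<le> (m*x'+m'*y')/(x'+y') \<longleftrightarrow> y*x' \<le> y'*x"
proof -
  have "(m*x+m'*y)/(x+y) \<le> (m*x'+m'*y')/(x'+y') \<longleftrightarrow> (m*x+m'*y)*(x'+y') \<le> (m*x'+m'*y')*(x+y)"
    using assms by (simp add: field_simps)
  also have "\<dots> \<longleftrightarrow> (m'-m)*(y*x') \<le> (m'-m)*(y'*x)"
    by (simp add: algebra_simps)
  also have "\<dots> \<longleftrightarrow> y*x' \<le> y'*x" using assms by simp
  finally show ?thesis .
qed

lemma gin:
  fixes m m' x y :: real
  assumes "0<x" "0<y" "m<m'"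
  shows "m < (m*x+m'*y)/(x+y)" "(m*x+m'*y)/(x+y) < m'"
proof -
  have "m*(x+y) < m*x+m'*y" using assms by (simp add: algebra_simps)
  then show "m < (m*x+m'*y)/(x+y)" using assms by (simp add: field_simps)
  have "m*x+m'*y < m'*(x+y)" using assms by (simp add: algebra_simps)
  then show "(m*x+m'*y)/(x+y) < m'" using assms by (simp add: field_simps)
qed

theorem mainTheorem2:
  fixes A :: "real set" and m m' :: real
  assumes "finite A" and "A \<noteq> {}" and "\<forall>a\<in>A. a > 0"
    and "m \<in> ratio_set A" and "m' \<in> ratio_set A" and "m < m'"
    and "\<forall>r\<in>ratio_set A. \<not> (m < r \<and> r < m')"
  shows "card (sum_quotient_set A \<inter> {m<..<m'}) + 1 \<ge>
           card {(x, y) \<in> A \<times> A. y / x = m} + card {(x, y) \<in> A \<times> A. y / x = m'}"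
proof -
  define X where "X = {x\<in>A. m*x \<in> A}"
  define Y where "Y = {x\<in>A. m'*x \<in> A}"
  define g where "g = (\<lambda>x y. (m*x+m'*y)/(x+y))"
  have pos: "\<And>a. a \<in> A \<Longrightarrow> a > 0" using assms(3) by blast
  have fX: "finite X" "finite Y" using assms(1) unfolding X_def Y_def by auto
  have e1: "{(x, y) \<in> A \<times> A. y / x = m} = (\<lambda>x. (x, m*x)) ` X"
    unfolding X_def
  proof (intro set_eqI iffI)
    fix p assume "p \<in> {(x, y) \<in> A \<times> A. y / x = m}"
    then obtain x y where "p = (x,y)" "x \<in> A" "y \<in> A" "y / x = m" by auto
    moreover then have "y = m*x" using pos[of x] by (auto simp: field_simps)
    ultimately show "p \<in> (\<lambda>x. (x, m*x)) ` {x\<in>A. m*x \<in> A}" by auto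
  next
    fix p assume "p \<in> (\<lambda>x. (x, m*x)) ` {x\<in>A. m*x \<in> A}"
    then obtain x where "p = (x, m*x)" "x \<in> A" "m*x \<in> A" by auto
    then show "p \<in> {(x, y) \<in> A \<times> A. y / x = m}" using pos[of x] by auto
  qed
  have e2: "{(x, y) \<in> A \<times> A. y / x = m'} = (\<lambda>x. (x, m'*x)) ` Y"
    unfolding Y_def
  proof (intro set_eqI iffI)
    fix p assume "p \<in> {(x, y) \<in> A \<times> A. y / x = m'}"
    then obtain x y where "p = (x,y)" "x \<in> A" "y \<in> A" "y / x = m'" by auto
    moreover then have "y = m'*x" using pos[of x] by (auto simp: field_simps)
    ultimately show "p \<in> (\<lambda>x. (x, m'*x)) ` {x\<in>A. m'*x \<in> A}" by auto
  next
    fix p assume "p \<in> (\<lambda>x. (x, m'*x)) ` {x\<in>A. m'*x \<in> A}"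
    then obtain x where "p = (x, m'*x)" "x \<in> A" "m'*x \<in> A" by auto
    then show "p \<in> {(x, y) \<in> A \<times> A. y / x = m'}" using pos[of x] by auto
  qed
  have c1: "card {(x, y) \<in> A \<times> A. y / x = m} = card X"
    unfolding e1 by (rule card_image) (auto simp: inj_on_def)
  have c2: "card {(x, y) \<in> A \<times> A. y / x = m'} = card Y"
    unfolding e2 by (rule card_image) (auto simp: inj_on_def)
  have "X \<noteq> {}"
  proof -
    obtain a b where "a \<in> A" "b \<in> A" "m = b/a" using assms(4) unfolding ratio_set_def by auto
    then have "a \<in> X" unfolding X_def using pos[of a] by auto
    then show ?thesis by auto
  qed
  have "Y \<noteq> {}"
  proof -
    obtain a b where "a \<in> A" "b \<in> A" "m' = b/a" using assms(5) unfolding ratio_set_def by auto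
    then have "a \<in> Y" unfolding Y_def using pos[of a] by auto
    then show ?thesis by auto
  qed
  define x0 where "x0 = Min X"
  define y0 where "y0 = Min Y"
  have x0X: "x0 \<in> X" using fX \<open>X \<noteq> {}\<close> unfolding x0_def by simp
  have y0Y: "y0 \<in> Y" using fX \<open>Y \<noteq> {}\<close> unfolding y0_def by simp
  have x0le: "\<And>x. x \<in> X \<Longrightarrow> x0 \<le> x" using fX unfolding x0_def by simp
  have y0le: "\<And>y. y \<in> Y \<Longrightarrow> y0 \<le> y" using fX unfolding y0_def by simp
  have Xpos: "\<And>x. x \<in> X \<Longrightarrow> 0 < x" using pos unfolding X_def by auto
  have Ypos: "\<And>x. x \<in> Y \<Longrightarrow> 0 < x" using pos unfolding Y_def by auto
  define T1 where "T1 = (\<lambda>x. g x y0) ` X"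
  define T2 where "T2 = (\<lambda>y. g x0 y) ` Y"
  have geq: "\<And>x y x' y'. 0<x \<Longrightarrow> 0<y \<Longrightarrow> 0<x' \<Longrightarrow> 0<y' \<Longrightarrow> g x y = g x' y' \<longleftrightarrow> y*x' = y'*x"
  proof -
    fix x y x' y' :: real
    assume h: "0<x" "0<y" "0<x'" "0<y'"
    show "g x y = g x' y' \<longleftrightarrow> y*x' = y'*x"
      using gle[OF h assms(6)] gle[OF h(3,4,1,2) assms(6)] unfolding g_def by argo
  qed
  have cT1: "card T1 = card X" unfolding T1_def
  proof (rule card_image, rule inj_onI)
    fix x x' assume "x \<in> X" "x' \<in> X" "g x y0 = g x' y0"
    then have "y0*x' = y0*x" using geq[of x y0 x' y0] Xpos Ypos y0Y by auto
    then show "x = x'" using Ypos y0Y by auto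
  qed
  have cT2: "card T2 = card Y" unfolding T2_def
  proof (rule card_image, rule inj_onI)
    fix y y' assume "y \<in> Y" "y' \<in> Y" "g x0 y = g x0 y'"
    then have "y*x0 = y'*x0" using geq[of x0 y x0 y'] Xpos Ypos x0X by auto
    then show "y = y'" using Xpos x0X by auto
  qed
  have int: "T1 \<inter> T2 \<subseteq> {g x0 y0}"
  proof
    fix t assume "t \<in> T1 \<inter> T2"
    then obtain x y where xy: "x \<in> X" "y \<in> Y" "t = g x y0" "t = g x0 y" unfolding T1_def T2_def by auto
    have a: "g x y0 \<le> g x0 y0"
      using gle[of x y0 x0 y0 m m'] Xpos Ypos xy x0X y0Y x0le[of x] assms(6)
      unfolding g_def by (simp add: mult_left_mono)
    have b: "g x0 y0 \<le> g x0 y"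
      using gle[of x0 y0 x0 y m m'] Xpos Ypos xy x0X y0Y y0le[of y] assms(6)
      unfolding g_def by (simp add: mult_right_mono)
    show "t \<in> {g x0 y0}" using a b xy by auto
  qed
  have fT: "finite T1" "finite T2" using fX unfolding T1_def T2_def by auto
  have "card (T1 \<union> T2) + card (T1 \<inter> T2) = card T1 + card T2"
    using card_Un_Int[OF fT] by simp
  moreover have "card (T1 \<inter> T2) \<le> 1"
    using card_mono[OF _ int] by simp
  ultimately have cU: "card X + card Y \<le> card (T1 \<union> T2) + 1" using cT1 cT2 by linarith
  have sq: "sum_quotient_set A = (\<lambda>(a,b,c,d). (a+b)/(c+d)) ` (A\<times>A\<times>A\<times>A)"
    unfolding sum_quotient_set_def by force
  have fS: "finite (sum_quotient_set A \<inter> {m<..<m'})"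
    unfolding sq using assms(1) by auto
  have sub: "T1 \<union> T2 \<subseteq> sum_quotient_set A \<inter> {m<..<m'}"
  proof
    fix t assume "t \<in> T1 \<union> T2"
    then obtain x y where xy: "x \<in> X" "y \<in> Y" "t = g x y"
      unfolding T1_def T2_def using x0X y0Y by auto
    have "t \<in> sum_quotient_set A"
      unfolding sum_quotient_set_def xy(3) g_def
      using xy(1,2) unfolding X_def Y_def by blast
    moreover have "t \<in> {m<..<m'}"
      using gin[of x y m m'] xy Xpos Ypos assms(6) unfolding g_def by auto
    ultimately show "t \<in> sum_quotient_set A \<inter> {m<..<m'}" by blast
  qed
  have "card (T1 \<union> T2) \<le> card (sum_quotient_set A \<inter> {m<..<m'})"
    by (rule card_mono[OF fS sub])
  then show ?thesis using cU c1 c2 by linarith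
qed

end
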